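(* Let $A$ be a finite set, let $C$ and $D$ be total clones on $A$ with $D \subseteq C$, let $T\subseteq P_A$ be a strong partial class, and let $I \subseteq \mathcal{I}_{\mathrm{str}}(C)$, such that: (i) $T \cap O_A \subseteq D$; (ii) $T \star \mathrm{Str}(D) \subseteq \mathrm{Str}(D) \cup T$ and $\mathrm{Str}(D) \star T \subseteq \mathrm{Str}(D) \cup T$; (iii) $X \cap T \neq Y \cap T$ for all $X,Y \in I$ with $X \neq Y$. Then $|\mathcal{I}_{\mathrm{str}}(D)| \geq |I|$.
   Context: A partial function of arity $n$ on $A$ is a map $f:\operatorname{dom} f\to A$ with $\operatorname{dom} f\subseteq A^n$; total if $\operatorname{dom} f=A^n$. $P_A$ is the set of all partial functions, $O_A$ the set of total ones. Composition $F=f(g_1,\dots,g_n)$ is given by $F(\mathbf{x})=f(g_1(\mathbf{x}),\dots,g_n(\mathbf{x}))$ on $\operatorname{dom} F=\{\mathbf{x}\in\bigcap_i\operatorname{dom} g_i : (g_1(\mathbf{x}),\dots,g_n(\mathbf{x}))\in\operatorname{dom} f\}$. A partial clone is a composition-closed subset of $P_A$ containing all projections; a total clone is one contained in $O_A$. $f\le g$ means $\operatorname{dom} f\subseteq \operatorname{dom} g$ and $f=g$ on $\operatorname{dom} f$; $\mathrm{Str}(X)=\{f\in P_A:\exists g\in X,\ f\le g\}$, and $X$ is strong if $X=\mathrm{Str}(X)$. For a total clone $C$, $\mathcal{I}_{\mathrm{str}}(C)$ is the set of strong partial clones $X$ with $X\cap O_A=C$. For $f$ $n$-ary and $g$ $m$-ary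 define: $(\zeta f)(x_1,\dots,x_n)=f(x_2,\dots,x_n,x_1)$; $(\tau f)(x_1,\dots,x_n)=f(x_2,x_1,x_3,\dots,x_n)$; $(\Delta f)(x_1,\dots,x_{n-1})=f(x_1,x_1,x_2,\dots,x_{n-1})$ (with $\zeta f=\tau f=\Delta f=f$ if $n=1$); $(\nabla f)(x_1,\dots,x_{n+1})=f(x_2,\dots,x_{n+1})$; $(f\star g)(x_1,\dots,x_{n+m-1})=f(g(x_1,\dots,x_m),x_{m+1},\dots,x_{n+m-1})$, with domains given by the composition rule. A partial class is a subset of $P_A$ closed under $\star,\zeta,\tau,\nabla,\Delta$; it is strong if it equals its $\mathrm{Str}$. For $X,Y\subseteq P_A$, $X\star Y=\{f\star g: f\in X, g\in Y\}$. *)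

theory Defs
  imports Main
begin

text \<open>The base set A is the (finite, nonempty) universe of the type 'a.
  A partial function of arity n is a pair (n, f) with n >= 1 and
  f :: 'a list => 'a option, where f xs is defined only if length xs = n
  (lists of length n model A^n).\<close>

type_synonym 'a pfun = "nat \<times> ('a list \<Rightarrow> 'a option)"

definition arity :: "'a pfun \<Rightarrow> nat" where "arity F = fst F"
definition fn :: "'a pfun \<Rightarrow> 'a list \<Rightarrow> 'a option" where "fn F = snd F"

definition P_A :: "'a pfun set" where
  "P_A = {F. arity F \<ge> 1 \<and> (\<forall>xs. fn F xs \<noteq> None \<longrightarrow> length xs = arity F)}"

definition O_A :: "'a pfun set" where
  "O_A = {F \<in> P_A. \<forall>xs. length xs = arity F \<longrightarrow> fn F xs \<noteq> None}"

definition proj :: "nat \<Rightarrow> nat \<Rightarrow> 'a pfun" where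
  "proj n i = (n, \<lambda>xs. if length xs = n then Some (xs ! i) else None)"

definition pcomp :: "'a pfun \<Rightarrow> 'a pfun list \<Rightarrow> 'a pfun" where
  "pcomp F Gs = (arity (hd Gs),
     \<lambda>xs. if length xs = arity (hd Gs) \<and> (\<forall>G\<in>set Gs. fn G xs \<noteq> None)
          then fn F (map (\<lambda>G. the (fn G xs)) Gs) else None)"

definition partial_clone :: "'a pfun set \<Rightarrow> bool" where
  "partial_clone X \<longleftrightarrow> X \<subseteq> P_A
     \<and> (\<forall>n i. 1 \<le> n \<and> i < n \<longrightarrow> proj n i \<in> X)
     \<and> (\<forall>F Gs m. F \<in> X \<and> set Gs \<subseteq> X \<and> length Gs = arity F
           \<and> (\<forall>G\<in>set Gs. arity G = m) \<longrightarrow> pcomp F Gs \<in> X)"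

definition total_clone :: "'a pfun set \<Rightarrow> bool" where
  "total_clone C \<longleftrightarrow> partial_clone C \<and> C \<subseteq> O_A"

definition pf_le :: "'a pfun \<Rightarrow> 'a pfun \<Rightarrow> bool" where
  "pf_le F G \<longleftrightarrow> arity F = arity G \<and> (\<forall>xs v. fn F xs = Some v \<longrightarrow> fn G xs = Some v)"

definition Str :: "'a pfun set \<Rightarrow> 'a pfun set" where
  "Str X = {F \<in> P_A. \<exists>G\<in>X. pf_le F G}"

definition strong :: "'a pfun set \<Rightarrow> bool" where
  "strong X \<longleftrightarrow> X = Str X"

definition I_str :: "'a pfun set \<Rightarrow> 'a pfun set set" where
  "I_str C = {X. partial_clone X \<and> strong X \<and> X \<inter> O_A = C}"

definition zeta :: "'a pfun \<Rightarrow> 'a pfun" where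
  "zeta F = (arity F, \<lambda>xs. if length xs = arity F then fn F (tl xs @ [hd xs]) else None)"

definition tau :: "'a pfun \<Rightarrow> 'a pfun" where
  "tau F = (if arity F < 2 then F else
     (arity F, \<lambda>xs. if length xs = arity F then fn F (xs ! 1 # xs ! 0 # drop 2 xs) else None))"

definition Delta :: "'a pfun \<Rightarrow> 'a pfun" where
  "Delta F = (if arity F < 2 then F else
     (arity F - 1, \<lambda>xs. if length xs = arity F - 1 then fn F (hd xs # xs) else None))"

definition nabla :: "'a pfun \<Rightarrow> 'a pfun" where
  "nabla F = (arity F + 1, \<lambda>xs. if length xs = arity F + 1 then fn F (tl xs) else None)"

definition pstar :: "'a pfun \<Rightarrow> 'a pfun \<Rightarrow> 'a pfun" where
  "pstar F G = (arity F + arity G - 1,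
     \<lambda>xs. if length xs = arity F + arity G - 1 then
            (case fn G (take (arity G) xs) of None \<Rightarrow> None
             | Some y \<Rightarrow> fn F (y # drop (arity G) xs))
          else None)"

definition set_star :: "'a pfun set \<Rightarrow> 'a pfun set \<Rightarrow> 'a pfun set" where
  "set_star X Y = {pstar F G | F G. F \<in> X \<and> G \<in> Y}"

definition partial_class :: "'a pfun set \<Rightarrow> bool" where
  "partial_class T \<longleftrightarrow> T \<subseteq> P_A
     \<and> (\<forall>F\<in>T. \<forall>G\<in>T. pstar F G \<in> T)
     \<and> (\<forall>F\<in>T. zeta F \<in> T \<and> tau F \<in> T \<and> nabla F \<in> T \<and> Delta F \<in> T)"

end

theory Submission
  imports Defs "HOL-Combinatorics.Permutations"
begin

definition minor :: "'a pfun \<Rightarrow> nat \<Rightarrow> (nat \<Rightarrow> nat) \<Rightarrow> 'a pfun" where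
  "minor F k s = (k, \<lambda>xs. if length xs = k then fn F (map (\<lambda>i. xs ! s i) [0..<arity F]) else None)"

lemma arity_minor[simp]: "arity (minor F k s) = k" by (simp add: minor_def arity_def)
lemma fn_minor: "fn (minor F k s) xs = (if length xs = k then fn F (map (\<lambda>i. xs ! s i) [0..<arity F]) else None)"
  by (simp add: minor_def fn_def)

lemma pfun_eqI: "arity F = arity G \<Longrightarrow> (\<And>xs. fn F xs = fn G xs) \<Longrightarrow> F = G"
  by (cases F; cases G) (auto simp: arity_def fn_def)

lemma minor_P_A: "F \<in> P_A \<Longrightarrow> 1 \<le> k \<Longrightarrow> minor F k s \<in> P_A"
  by (auto simp: P_A_def fn_minor split: if_splits)

lemma minor_minor:
  assumes "\<forall>i<arity F. s i < k"
  shows "minor (minor F k s) k' r = minor F k' (r \<circ> s)"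
proof (rule pfun_eqI)
  fix xs show "fn (minor (minor F k s) k' r) xs = fn (minor F k' (r \<circ> s)) xs"
    using assms by (auto simp: fn_minor intro!: arg_cong[where f="fn F"])
qed simp

lemma minor_cong: "\<forall>i<arity F. s i = s' i \<Longrightarrow> minor F k s = minor F k s'"
  by (rule pfun_eqI) (auto simp: fn_minor intro!: arg_cong[where f="fn F"])

lemma minor_id: assumes "F \<in> P_A" shows "minor F (arity F) id = F"
proof (rule pfun_eqI)
  fix xs show "fn (minor F (arity F) id) xs = fn F xs"
  proof (cases "length xs = arity F")
    case True
    then have "map (\<lambda>i. xs ! id i) [0..<arity F] = xs" using map_nth[of xs] by simp
    then show ?thesis using True by (simp add: fn_minor)
  next
    case False then show ?thesis using assms by (auto simp: fn_minor P_A_def) (metis option.exhaust)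
  qed
qed simp

lemma fn_zeta: "fn (zeta F) xs = (if length xs = arity F then fn F (tl xs @ [hd xs]) else None)"
  by (simp add: zeta_def fn_def arity_def)
lemma arity_zeta[simp]: "arity (zeta F) = arity F" by (simp add: zeta_def arity_def)
lemma fn_tau: "arity F \<ge> 2 \<Longrightarrow> fn (tau F) xs = (if length xs = arity F then fn F (xs ! 1 # xs ! 0 # drop 2 xs) else None)"
  by (simp add: tau_def fn_def arity_def)
lemma arity_tau[simp]: "arity (tau F) = arity F" by (simp add: tau_def arity_def)
lemma fn_Delta: "arity F \<ge> 2 \<Longrightarrow> fn (Delta F) xs = (if length xs = arity F - 1 then fn F (hd xs # xs) else None)"
  by (simp add: Delta_def fn_def arity_def)
lemma arity_Delta: "arity F \<ge> 2 \<Longrightarrow> arity (Delta F) = arity F - 1" by (simp add: Delta_def arity_def)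
lemma fn_nabla: "fn (nabla F) xs = (if length xs = arity F + 1 then fn F (tl xs) else None)"
  by (simp add: nabla_def fn_def arity_def)
lemma arity_nabla[simp]: "arity (nabla F) = arity F + 1" by (simp add: nabla_def arity_def)

lemma zeta_minor: assumes "F \<in> P_A" shows "zeta F = minor F (arity F) (\<lambda>i. Suc i mod arity F)"
proof (rule pfun_eqI)
  fix xs show "fn (zeta F) xs = fn (minor F (arity F) (\<lambda>i. Suc i mod arity F)) xs"
  proof (cases "length xs = arity F")
    case True
    with assms have ne: "xs \<noteq> []" by (auto simp: P_A_def)
    have "tl xs @ [hd xs] = map (\<lambda>i. xs ! (Suc i mod arity F)) [0..<arity F]"
      using ne True by (auto simp: rotate1_hd_tl[symmetric] nth_rotate1 intro!: nth_equalityI)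
    then show ?thesis using True by (simp add: fn_minor fn_zeta)
  next
    case False then show ?thesis by (simp add: fn_minor fn_zeta)
  qed
qed simp

lemma tau_minor: assumes "arity F \<ge> 2"
  shows "tau F = minor F (arity F) (\<lambda>i. if i = 0 then 1 else if i = 1 then 0 else i)"
proof (rule pfun_eqI)
  fix xs show "fn (tau F) xs = fn (minor F (arity F) (\<lambda>i. if i = 0 then 1 else if i = 1 then 0 else i)) xs"
  proof (cases "length xs = arity F")
    case True
    have "xs ! 1 # xs ! 0 # drop 2 xs = map (\<lambda>i. xs ! (if i = 0 then 1 else if i = 1 then 0 else i)) [0..<arity F]"
      using True assms
      apply (intro nth_equalityI)
       apply simp
      subgoal for i by (cases i; cases "i - 1") (auto simp: nth_Cons')
      done
    then show ?thesis using True assms by (simp add: fn_minor fn_tau)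
  next
    case False then show ?thesis using assms by (simp add: fn_minor fn_tau)
  qed
qed simp

lemma Delta_minor: assumes "arity F \<ge> 2"
  shows "Delta F = minor F (arity F - 1) (\<lambda>i. i - 1)"
proof (rule pfun_eqI)
  fix xs show "fn (Delta F) xs = fn (minor F (arity F - 1) (\<lambda>i. i - 1)) xs"
  proof (cases "length xs = arity F - 1")
    case True
    have "hd xs # xs = map (\<lambda>i. xs ! (i - 1)) [0..<arity F]"
      using True assms
      apply (intro nth_equalityI)
       apply simp
      subgoal for i by (cases xs; cases i) auto
      done
    then show ?thesis using True assms by (simp add: fn_minor fn_Delta)
  next
    case False then show ?thesis using assms by (simp add: fn_minor fn_Delta)
  qed
qed (use assms in \<open>simp add: arity_Delta\<close>)

lemma nabla_minor: "nabla F = minor F (arity F + 1) Suc"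
proof (rule pfun_eqI)
  fix xs show "fn (nabla F) xs = fn (minor F (arity F + 1) Suc) xs"
  proof (cases "length xs = arity F + 1")
    case True
    have "tl xs = map (\<lambda>i. xs ! Suc i) [0..<arity F]"
      using True by (auto intro!: nth_equalityI simp: nth_tl)
    then show ?thesis using True by (simp add: fn_minor fn_nabla)
  next
    case False then show ?thesis by (simp add: fn_minor fn_nabla)
  qed
qed simp

definition okm :: "'a pfun set \<Rightarrow> nat \<Rightarrow> (nat \<Rightarrow> nat) \<Rightarrow> bool" where
  "okm K n s \<longleftrightarrow> (\<forall>i<n. s i < n) \<and> (\<forall>F\<in>K. arity F = n \<longrightarrow> minor F n s \<in> K)"

lemma okm_comp: assumes "okm K n s" "okm K n r" shows "okm K n (r \<circ> s)"
  using assms unfolding okm_def by (auto simp: minor_minor[symmetric])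

lemma okm_cong: assumes "okm K n s" "\<forall>i<n. s i = s' i" shows "okm K n s'"
proof -
  have "minor F n s' = minor F n s" if "arity F = n" for F :: "'a pfun"
    using that assms(2) by (intro minor_cong) auto
  then show ?thesis using assms unfolding okm_def by auto
qed

lemma okm_id: assumes "partial_class K" shows "okm K n id"
  using assms minor_id unfolding okm_def partial_class_def by fastforce

lemma okm_rot1: assumes "partial_class K" "n \<ge> 1" shows "okm K n (\<lambda>i. Suc i mod n)"
  using assms zeta_minor unfolding okm_def partial_class_def by fastforce

lemma okm_rot: assumes "partial_class K" "n \<ge> 1" shows "okm K n (\<lambda>i. (i + j) mod n)"
proof (induction j)
  case 0 show ?case using okm_id[OF assms(1)] by (rule okm_cong) auto
next
  case (Suc j)
  have "okm K n ((\<lambda>i. Suc i mod n) \<circ> (\<lambda>i. (i + j) mod n))"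
    by (rule okm_comp[OF Suc okm_rot1[OF assms]])
  then show ?case by (rule okm_cong) (auto simp: mod_Suc_eq)
qed

lemma okm_tau: assumes "partial_class K" "n \<ge> 2" shows "okm K n (Transposition.transpose 0 1)"
proof -
  have "okm K n (\<lambda>i. if i = 0 then 1 else if i = 1 then 0 else i)"
    using assms tau_minor unfolding okm_def partial_class_def by fastforce
  then show ?thesis by (rule okm_cong) (auto simp: Transposition.transpose_def)
qed

lemma okm_t0: assumes "partial_class K" "0 < d" "d < n" shows "okm K n (Transposition.transpose 0 d)"
  using assms(2,3)
proof (induction d)
  case 0 then show ?case by simp
next
  case (Suc d)
  show ?case
  proof (cases "d = 0")
    case True then show ?thesis using okm_tau[OF assms(1)] Suc by simp
  next
    case False
    have IH: "okm K n (Transposition.transpose 0 d)" using Suc False by simp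
    have r1: "okm K n (\<lambda>i. (i + 1) mod n)" using okm_rot[OF assms(1), of n 1] Suc by simp
    have rinv: "okm K n (\<lambda>i. (i + (n - 1)) mod n)" using okm_rot[OF assms(1), of n "n - 1"] Suc by simp
    have "okm K n (Transposition.transpose 0 d \<circ> (\<lambda>i. (i + (n - 1)) mod n))" by (rule okm_comp[OF rinv IH])
    then have "okm K n ((\<lambda>i. (i + 1) mod n) \<circ> (Transposition.transpose 0 d \<circ> (\<lambda>i. (i + (n - 1)) mod n)))"
      by (rule okm_comp[OF _ r1])
    then have t1: "okm K n (Transposition.transpose 1 (Suc d))"
    proof (rule okm_cong, intro allI impI)
      fix i assume "i < n"
      show "((\<lambda>i. (i + 1) mod n) \<circ> (Transposition.transpose 0 d \<circ> (\<lambda>i. (i + (n - 1)) mod n))) i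
            = Transposition.transpose 1 (Suc d) i"
      proof -
      have n2: "n \<ge> 2" "Suc d < n" using Suc False by auto
      consider "i = 0" | "i = 1" | "i = Suc d" | "i \<noteq> 0" "i \<noteq> 1" "i \<noteq> Suc d" by blast
      then show ?thesis
      proof cases
        case 1
        have a: "(0 + (n - 1)) mod n = n - 1" using n2 by simp
        have b: "Transposition.transpose 0 d (n - 1) = n - 1" using n2 False by (simp add: Transposition.transpose_def)
        have c: "(n - 1 + 1) mod n = 0" using n2 by simp
        show ?thesis by (simp only: comp_def 1 a b c) (simp add: Transposition.transpose_def)
      next
        case 2
        have a: "(1 + (n - 1)) mod n = 0" using n2 by simp
        have b: "Transposition.transpose 0 d 0 = d" by (simp add: Transposition.transpose_def)
        have c: "(d + 1) mod n = Suc d" using n2 by simp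
        have r: "Transposition.transpose 1 (Suc d) 1 = Suc d" by (simp add: Transposition.transpose_def)
        show ?thesis by (simp only: comp_def 2 a b c r)
      next
        case 3
        have a: "(Suc d + (n - 1)) mod n = d"
        proof -
          have "Suc d + (n - 1) = d + n" using n2 by simp
          then show ?thesis using n2 by simp
        qed
        have b: "Transposition.transpose 0 d d = 0" by (simp add: Transposition.transpose_def)
        have c: "(0 + 1) mod n = 1" using n2 by simp
        have r: "Transposition.transpose 1 (Suc d) (Suc d) = 1" by (simp add: Transposition.transpose_def)
        show ?thesis by (simp only: comp_def 3 a b c r)
      next
        case 4
        have eq: "i + (n - 1) = (i - 1) + n" using 4(1) \<open>i < n\<close> by linarith
        have "(i + (n - 1)) mod n = ((i - 1) + n) mod n" by (simp only: eq)
        also have "\<dots> = i - 1" using \<open>i < n\<close> by (simp only: mod_add_self2) simp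
        finally have e: "(i + (n - 1)) mod n = i - 1" .
        have ne: "i - 1 \<noteq> 0" "i - 1 \<noteq> d" using 4 by linarith+
        have b: "Transposition.transpose 0 d (i - 1) = i - 1" using ne by (simp add: Transposition.transpose_def)
        have c: "(i - 1 + 1) mod n = i" using 4 \<open>i < n\<close> by simp
        have r: "Transposition.transpose 1 (Suc d) i = i" using 4 by (simp add: Transposition.transpose_def)
        show ?thesis by (simp only: comp_def e b c r)
      qed
      qed
    qed
    have ta: "okm K n (Transposition.transpose 0 1)" using okm_tau[OF assms(1), of n] Suc by simp
    have "okm K n (Transposition.transpose 1 (Suc d) \<circ> (Transposition.transpose 0 1 \<circ> Transposition.transpose 1 (Suc d)))"
      by (rule okm_comp[OF okm_comp[OF t1 ta] t1])
    then show ?thesis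
    proof (rule okm_cong, intro allI impI)
      fix i assume "i < n"
      show "(Transposition.transpose 1 (Suc d) \<circ> (Transposition.transpose 0 1 \<circ> Transposition.transpose 1 (Suc d))) i
            = Transposition.transpose 0 (Suc d) i"
        using False by (cases "i = 0"; cases "i = 1"; cases "i = Suc d") (simp_all add: Transposition.transpose_def)
    qed
  qed
qed

lemma okm_t: assumes "partial_class K" "a < n" "b < n" shows "okm K n (Transposition.transpose a b)"
proof -
  consider "a = b" | "a = 0" "b \<noteq> 0" | "b = 0" "a \<noteq> 0" | "a \<noteq> b" "a \<noteq> 0" "b \<noteq> 0" by (cases "a = b"; cases "a = 0"; cases "b = 0") simp_all
  then show ?thesis
  proof cases
    case 1 
    have "okm K n id" by (rule okm_id[OF assms(1)])
    then show ?thesis by (rule okm_cong) (use 1 in \<open>simp add: Transposition.transpose_def\<close>)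
  next
    case 2 then show ?thesis using okm_t0[OF assms(1)] assms by simp
  next
    case 3 then show ?thesis using okm_t0[OF assms(1), of a n] assms by (simp add: Transposition.transpose_commute)
  next
    case 4
    have ta: "okm K n (Transposition.transpose 0 a)" using okm_t0[OF assms(1)] assms 4 by auto
    have tb: "okm K n (Transposition.transpose 0 b)" using okm_t0[OF assms(1)] assms 4 by auto
    have "okm K n (Transposition.transpose 0 a \<circ> (Transposition.transpose 0 b \<circ> Transposition.transpose 0 a))"
      by (rule okm_comp[OF okm_comp[OF ta tb] ta])
    then show ?thesis
    proof (rule okm_cong, intro allI impI)
      fix i assume "i < n"
      show "(Transposition.transpose 0 a \<circ> (Transposition.transpose 0 b \<circ> Transposition.transpose 0 a)) i
            = Transposition.transpose a b i"
        using 4 by (cases "i = 0"; cases "i = a"; cases "i = b") (simp_all add: Transposition.transpose_def)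
    qed
  qed
qed

lemma okm_perm: assumes "partial_class K" "p permutes {..<n}" shows "okm K n p"
  using assms(2) finite_lessThan
proof (induction rule: permutes_induct)
  case id then show ?case by (rule okm_id[OF assms(1)])
next
  case (swap a b p)
  then show ?case using okm_t[OF assms(1)] by (intro okm_comp) auto
qed

lemma pclass_P_A: "partial_class K \<Longrightarrow> F \<in> K \<Longrightarrow> F \<in> P_A"
  unfolding partial_class_def by blast

lemma P_A_arity: "F \<in> P_A \<Longrightarrow> arity F \<ge> 1" by (simp add: P_A_def)

lemma minor_inj:
  assumes K: "partial_class K"
  shows "F \<in> K \<Longrightarrow> arity F = n \<Longrightarrow> inj_on s {..<n} \<Longrightarrow> \<forall>i<n. s i < k \<Longrightarrow> n \<le> k
     \<Longrightarrow> d = k - n \<Longrightarrow> minor F k s \<in> K"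
proof (induction d arbitrary: F n s)
  case 0
  then have nk: "n = k" by simp
  define p where "p = (\<lambda>i. if i < n then s i else i)"
  have "s ` {..<n} = {..<n}" using 0 nk by (intro endo_inj_surj) auto
  then have "bij_betw s {..<n} {..<n}" using 0 by (simp add: bij_betw_def)
  then have "bij_betw p {..<n} {..<n}" by (rule iffD1[OF bij_betw_cong, rotated]) (simp add: p_def)
  then have "p permutes {..<n}" by (rule bij_imp_permutes) (simp add: p_def)
  then have "okm K n p" by (rule okm_perm[OF K])
  then have "minor F n p \<in> K" using 0 by (auto simp: okm_def)
  moreover have "minor F n p = minor F n s" using 0 by (intro minor_cong) (auto simp: p_def)
  ultimately show ?case using nk by simp
next
  case (Suc d)
  have "card (s ` {..<n}) = n" using Suc by (simp add: card_image)
  then have "\<not> {..<k} \<subseteq> s ` {..<n}" using Suc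
    by (metis card_lessThan card_mono diff_is_0_eq' finite_imageI finite_lessThan nat.distinct(1))
  then obtain c where c: "c < k" "c \<notin> s ` {..<n}" by auto
  define s' where "s' = (\<lambda>j. if j = 0 then c else s (j - 1))"
  have "nabla F \<in> K" using Suc K unfolding partial_class_def by blast
  moreover have "arity (nabla F) = Suc n" using Suc by simp
  moreover have "inj_on s' {..<Suc n}"
  proof (rule inj_onI)
    fix x y assume x: "x \<in> {..<Suc n}" and y: "y \<in> {..<Suc n}" and e: "s' x = s' y"
    have inj: "inj_on s {..<n}" by (rule Suc.prems(3))
    show "x = y"
    proof (cases "x = 0")
      case True
      show ?thesis
      proof (cases "y = 0")
        case False
        then have "y - 1 < n" using y by simp
        moreover have "c = s (y - 1)" using e True False by (simp add: s'_def)
        ultimately show ?thesis using c(2) by blast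
      qed (use True in simp)
    next
      case xF: False
      show ?thesis
      proof (cases "y = 0")
        case True
        have "x - 1 < n" using x xF by simp
        moreover have "c = s (x - 1)" using e True xF by (simp add: s'_def)
        ultimately show ?thesis using c(2) by blast
      next
        case False
        have "s (x - 1) = s (y - 1)" using e xF False by (simp add: s'_def)
        moreover have "x - 1 \<in> {..<n}" "y - 1 \<in> {..<n}" using x y xF False by auto
        ultimately have "x - 1 = y - 1" using inj by (simp add: inj_on_eq_iff)
        then show ?thesis using xF False by simp
      qed
    qed
  qed
  moreover have "\<forall>i<Suc n. s' i < k" using Suc c by (auto simp: s'_def)
  moreover have "Suc n \<le> k" "d = k - Suc n" using Suc.prems by auto
  ultimately have "minor (nabla F) k s' \<in> K" by (rule Suc.IH[of "nabla F" "Suc n" s'])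
  moreover have "minor (nabla F) k s' = minor F k s"
    using Suc by (simp add: nabla_minor minor_minor) (intro minor_cong, simp add: s'_def)
  ultimately show ?case by simp
qed

lemma minor_gen:
  assumes K: "partial_class K"
  shows "F \<in> K \<Longrightarrow> arity F = n \<Longrightarrow> \<forall>i<n. s i < k \<Longrightarrow> 1 \<le> k \<Longrightarrow> minor F k s \<in> K"
proof (induction n arbitrary: F s rule: less_induct)
  case (less n)
  show ?case
  proof (cases "inj_on s {..<n}")
    case True
    have "s ` {..<n} \<subseteq> {..<k}" using less by auto
    then have "n \<le> k" using card_inj_on_le[OF True, of "{..<k}"] by simp
    then show ?thesis using minor_inj[OF K] less True by blast
  next
    case False
    then obtain p q where pq: "p < q" "q < n" "s p = s q"
      unfolding inj_on_def by (metis lessThan_iff linorder_neqE_nat)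
    define \<pi> where "\<pi> = Transposition.transpose 1 q \<circ> Transposition.transpose 0 p"
    define \<rho> where "\<rho> = Transposition.transpose 0 p \<circ> Transposition.transpose 1 q"
    have n2: "n \<ge> 2" using pq by simp
    have piperm: "\<pi> permutes {..<n}" unfolding \<pi>_def using pq
      by (intro permutes_compose permutes_swap_id) auto
    have pilt: "\<forall>i<n. \<pi> i < n" using permutes_in_image[OF piperm] by simp
    have rholt: "\<forall>i<n. \<rho> i < n" unfolding \<rho>_def using pq by (auto simp: Transposition.transpose_def)
    have rhopi: "\<rho> (\<pi> i) = i" for i unfolding \<rho>_def \<pi>_def by (auto simp: Transposition.transpose_def)
    have pi0: "\<pi> i = 0 \<longleftrightarrow> i = p" for i unfolding \<pi>_def using pq by (auto simp: Transposition.transpose_def)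
    have rho1: "\<rho> 1 = q" unfolding \<rho>_def using pq by (auto simp: Transposition.transpose_def)
    have G: "minor F n \<pi> \<in> K" using okm_perm[OF K piperm] less by (auto simp: okm_def)
    then have DG: "Delta (minor F n \<pi>) \<in> K" using K unfolding partial_class_def by blast
    have DGeq: "Delta (minor F n \<pi>) = minor F (n - 1) ((\<lambda>i. i - 1) \<circ> \<pi>)"
      using n2 less pilt by (simp add: Delta_minor minor_minor)
    define s' where "s' = (\<lambda>j. s (\<rho> (j + 1)))"
    have "minor (Delta (minor F n \<pi>)) k s' \<in> K"
    proof (rule less.IH[of "n - 1"])
      show "n - 1 < n" using n2 by simp
      show "Delta (minor F n \<pi>) \<in> K" by (rule DG)
      show "arity (Delta (minor F n \<pi>)) = n - 1" using DGeq by simp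
      show "\<forall>i<n - 1. s' i < k" using less rholt by (auto simp: s'_def)
      show "1 \<le> k" by (rule less)
    qed
    moreover have "minor (Delta (minor F n \<pi>)) k s' = minor F k s"
    proof -
      have "minor (Delta (minor F n \<pi>)) k s' = minor F k (s' \<circ> ((\<lambda>i. i - 1) \<circ> \<pi>))"
        unfolding DGeq using less pilt n2 by (intro minor_minor) (auto simp: less_diff_conv2)
      also have "\<dots> = minor F k s"
      proof (rule minor_cong, intro allI impI)
        fix i assume "i < arity F"
        show "(s' \<circ> ((\<lambda>i. i - 1) \<circ> \<pi>)) i = s i"
        proof (cases "\<pi> i = 0")
          case True then show ?thesis using pi0[of i] rho1 pq by (simp add: s'_def)
        next
          case False then show ?thesis using rhopi by (simp add: s'_def)
        qed
      qed
      finally show ?thesis .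
    qed
    ultimately show ?thesis by simp
  qed
qed

lemma fn_pstar: "fn (pstar F G) xs = (if length xs = arity F + arity G - 1 then
   (case fn G (take (arity G) xs) of None \<Rightarrow> None | Some y \<Rightarrow> fn F (y # drop (arity G) xs)) else None)"
  by (simp add: pstar_def fn_def arity_def)
lemma arity_pstar[simp]: "arity (pstar F G) = arity F + arity G - 1"
  by (simp add: pstar_def arity_def)

lemma fn_pcomp: "fn (pcomp F Gs) xs = (if length xs = arity (hd Gs) \<and> (\<forall>G\<in>set Gs. fn G xs \<noteq> None)
          then fn F (map (\<lambda>G. the (fn G xs)) Gs) else None)"
  by (simp add: pcomp_def fn_def arity_def)
lemma arity_pcomp[simp]: "arity (pcomp F Gs) = arity (hd Gs)"
  by (simp add: pcomp_def arity_def)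

definition Wj :: "'a pfun \<Rightarrow> 'a pfun list \<Rightarrow> nat \<Rightarrow> nat \<Rightarrow> 'a pfun" where
  "Wj F Gs m j = (length Gs - j + m, \<lambda>xs. if length xs = length Gs - j + m
      \<and> (\<forall>G\<in>set (take j Gs). fn G (drop (length Gs - j) xs) \<noteq> None)
     then fn F (map (\<lambda>G. the (fn G (drop (length Gs - j) xs))) (take j Gs) @ take (length Gs - j) xs)
     else None)"

lemma arity_Wj[simp]: "arity (Wj F Gs m j) = length Gs - j + m" by (simp add: Wj_def arity_def)
lemma fn_Wj: "fn (Wj F Gs m j) xs = (if length xs = length Gs - j + m
      \<and> (\<forall>G\<in>set (take j Gs). fn G (drop (length Gs - j) xs) \<noteq> None)
     then fn F (map (\<lambda>G. the (fn G (drop (length Gs - j) xs))) (take j Gs) @ take (length Gs - j) xs)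
     else None)" by (simp add: Wj_def fn_def)

lemma Wj0: "arity (F::'a pfun) = length Gs \<Longrightarrow> Wj F Gs m 0 = minor F (length Gs + m) id"
proof (rule pfun_eqI)
  fix xs :: "'a list" assume a: "arity F = length Gs"
  have "length xs = length Gs + m \<Longrightarrow> map (\<lambda>i. xs ! id i) [0..<length Gs] = take (length Gs) xs"
    by (auto intro!: nth_equalityI)
  then show "fn (Wj F Gs m 0) xs = fn (minor F (length Gs + m) id) xs"
    using a by (simp add: fn_Wj fn_minor)
qed simp

lemma Wj_step:
  assumes j: "j < length Gs" and ar: "arity (Gs ! j) = m"
  shows "Wj F Gs m (Suc j) = minor (pstar (Wj F Gs m j) (Gs ! j)) (length Gs - Suc j + m)
           (\<lambda>i. if i < m then (length Gs - Suc j) + i else i - m)"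
proof (rule pfun_eqI)
  fix ys
  define n where "n = length Gs"
  define \<sigma> where "\<sigma> = (\<lambda>i. if i < m then (length Gs - Suc j) + i else i - m)"
  show "fn (Wj F Gs m (Suc j)) ys = fn (minor (pstar (Wj F Gs m j) (Gs ! j)) (length Gs - Suc j + m) \<sigma>) ys"
  proof (cases "length ys = n - Suc j + m")
    case False then show ?thesis by (simp add: fn_Wj fn_minor n_def)
  next
    case True
    define zs where "zs = map (\<lambda>i. ys ! \<sigma> i) [0..<n - j + m + m - 1]"
    have lz: "length zs = n - j + m + m - 1" by (simp add: zs_def)
    have tk: "take m zs = drop (n - Suc j) ys"
      using True j by (auto simp: zs_def \<sigma>_def n_def intro!: nth_equalityI)
    have dr: "drop m zs = ys"
      using True j by (auto simp: zs_def \<sigma>_def n_def intro!: nth_equalityI)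
    have nj: "n - j = Suc (n - Suc j)" using j n_def by simp
    have tkj: "take (Suc j) Gs = take j Gs @ [Gs ! j]" using j by (simp add: take_Suc_conv_app_nth)
    have lhs: "fn (minor (pstar (Wj F Gs m j) (Gs ! j)) (n - Suc j + m) \<sigma>) ys
      = (case fn (Gs ! j) (drop (n - Suc j) ys) of None \<Rightarrow> None | Some y \<Rightarrow> fn (Wj F Gs m j) (y # ys))"
    proof -
      have zeq: "map (\<lambda>i. ys ! \<sigma> i) [0..<arity (pstar (Wj F Gs m j) (Gs ! j))] = zs"
        by (simp add: zs_def ar n_def)
      show ?thesis
        apply (simp only: fn_minor zeq)
        using True lz tk dr by (simp add: fn_pstar n_def ar dr[folded ar] split: option.split)
    qed
    show ?thesis
    proof (cases "fn (Gs ! j) (drop (n - Suc j) ys)")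
      case None
      then show ?thesis using lhs True tkj by (auto simp: fn_Wj n_def)
    next
      case (Some y)
      have "fn (Wj F Gs m j) (y # ys) = fn (Wj F Gs m (Suc j)) ys"
        using True nj tkj Some by (auto simp: fn_Wj n_def)
      then show ?thesis using lhs Some by (simp add: n_def)
    qed
  qed
qed simp

lemma Wj_final:
  assumes "Gs \<noteq> []" "arity (hd Gs) = m"
  shows "Wj F Gs m (length Gs) = pcomp F Gs"
  by (rule pfun_eqI) (use assms in \<open>auto simp: fn_Wj fn_pcomp\<close>)

lemma pclass_comp:
  assumes K: "partial_class K" and F: "F \<in> K" and Gs: "set Gs \<subseteq> K" "length Gs = arity F"
    and m: "\<forall>G\<in>set Gs. arity G = m"
  shows "pcomp F Gs \<in> K"
proof -
  define n where "n = length Gs"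
  have n1: "n \<ge> 1" using pclass_P_A[OF K F] P_A_arity Gs n_def by fastforce
  then have ne: "Gs \<noteq> []" using n_def by auto
  have hm: "arity (hd Gs) = m" using ne m by simp
  have m1: "m \<ge> 1" using hm pclass_P_A[OF K] P_A_arity Gs ne by (metis hd_in_set subsetD)
  have "j \<le> n \<Longrightarrow> Wj F Gs m j \<in> K" for j
  proof (induction j)
    case 0 then show ?case
      using Wj0[of F Gs m] minor_gen[OF K F, of "arity F" id "n + m"] Gs m1 n_def by simp
  next
    case (Suc j)
    have j: "j < n" using Suc by simp
    have Gj: "Gs ! j \<in> K" "arity (Gs ! j) = m" using j Gs m n_def by auto
    have "pstar (Wj F Gs m j) (Gs ! j) \<in> K" using Suc K Gj unfolding partial_class_def by auto
    then have "minor (pstar (Wj F Gs m j) (Gs ! j)) (length Gs - Suc j + m)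
           (\<lambda>i. if i < m then (length Gs - Suc j) + i else i - m) \<in> K"
      using j Gj m1 by (intro minor_gen[OF K, where n = "n - j + m + m - 1"]) (auto simp: n_def)
    then show ?case using Wj_step[of j Gs m F] j Gj n_def by simp
  qed
  then have "Wj F Gs m n \<in> K" by simp
  then show ?thesis using Wj_final[OF ne hm] n_def by simp
qed

lemma fn_proj: "fn (proj n i) xs = (if length xs = n then Some (xs ! i) else None)"
  by (simp add: proj_def fn_def)
lemma arity_proj[simp]: "arity (proj n i) = n" by (simp add: proj_def arity_def)

lemma clone_P_A: "partial_clone X \<Longrightarrow> G \<in> X \<Longrightarrow> G \<in> P_A"
  unfolding partial_clone_def by blast

lemma clone_minor:
  fixes X :: "'a pfun set"
  assumes X: "partial_clone X" and G: "G \<in> X" and s: "\<forall>i<arity G. s i < k" and k: "1 \<le> k"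
  shows "minor G k s \<in> X"
proof -
  define Ps :: "'a pfun list" where "Ps = map (\<lambda>i. proj k (s i)) [0..<arity G]"
  have n1: "arity G \<ge> 1" using clone_P_A[OF X G] P_A_arity by blast
  have "pcomp G Ps \<in> X"
    using X G s k unfolding partial_clone_def Ps_def by (intro conjunct2[OF conjunct2[OF X[unfolded partial_clone_def]], rule_format]) (auto simp: Ps_def)
  moreover have "pcomp G Ps = minor G k s"
  proof (rule pfun_eqI)
    have hd: "hd Ps = proj k (s 0)" using n1 unfolding Ps_def by (simp add: hd_map upt_conv_Cons)
    then show "arity (pcomp G Ps) = arity (minor G k s)" by simp
    fix xs show "fn (pcomp G Ps) xs = fn (minor G k s) xs"
      using hd by (auto simp: fn_pcomp fn_minor fn_proj Ps_def comp_def)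
  qed
  ultimately show ?thesis by simp
qed

lemma clone_pstar:
  assumes X: "partial_clone X" and G1: "G1 \<in> X" and G2: "G2 \<in> X"
  shows "pstar G1 G2 \<in> X"
proof -
  define n1 where "n1 = arity G1"
  define n2 where "n2 = arity G2"
  define N where "N = n1 + n2 - 1"
  have a1: "n1 \<ge> 1" using clone_P_A[OF X G1] P_A_arity n1_def by blast
  have a2: "n2 \<ge> 1" using clone_P_A[OF X G2] P_A_arity n2_def by blast
  define Gs where "Gs = minor G2 N (\<lambda>i. i) # map (\<lambda>i. proj N (n2 + i)) [0..<n1 - 1]"
  have M: "minor G2 N (\<lambda>i. i) \<in> X" using a1 a2 by (intro clone_minor[OF X G2]) (auto simp: N_def n2_def)
  have projX: "\<forall>i<n1 - 1. proj N (n2 + i) \<in> X"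
  proof (intro allI impI)
    fix i assume "i < n1 - 1"
    then have "1 \<le> N \<and> n2 + i < N" using a1 a2 unfolding N_def by linarith
    then show "proj N (n2 + i) \<in> X" using X unfolding partial_clone_def by blast
  qed
  have "pcomp G1 Gs \<in> X"
    using X G1 M a1 a2 projX unfolding partial_clone_def Gs_def
    by (intro conjunct2[OF conjunct2[OF X[unfolded partial_clone_def]], rule_format, where m = N])
       (auto simp: Gs_def N_def n1_def n2_def)
  moreover have "pcomp G1 Gs = pstar G1 G2"
  proof (rule pfun_eqI)
    show "arity (pcomp G1 Gs) = arity (pstar G1 G2)" by (simp add: Gs_def N_def n1_def n2_def)
    fix xs
    show "fn (pcomp G1 Gs) xs = fn (pstar G1 G2) xs"
    proof (cases "length xs = N")
      case False then show ?thesis by (simp add: fn_pcomp fn_pstar Gs_def N_def n1_def n2_def)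
    next
      case True
      have t: "map (\<lambda>i. xs ! i) [0..<n2] = take n2 xs" using True a1 by (auto simp: N_def intro!: nth_equalityI)
      have d: "map (\<lambda>i. xs ! (n2 + i)) [0..<n1 - Suc 0] = drop n2 xs" using True a1 by (auto simp: N_def intro!: nth_equalityI)
      show ?thesis using True
        by (auto simp: fn_pcomp fn_pstar Gs_def fn_minor fn_proj comp_def t d n1_def[symmetric] n2_def[symmetric] N_def split: option.split)
    qed
  qed
  ultimately show ?thesis by simp
qed

lemma pf_le_refl: "pf_le F F" by (simp add: pf_le_def)
lemma pf_le_trans: "pf_le F G \<Longrightarrow> pf_le G H \<Longrightarrow> pf_le F H" by (simp add: pf_le_def)

lemma Str_minor:
  assumes D: "partial_clone D" and H: "H \<in> Str D" and s: "\<forall>i<arity H. s i < k" and k: "1 \<le> k"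
  shows "minor H k s \<in> Str D"
proof -
  obtain G where G: "G \<in> D" "pf_le H G" and HP: "H \<in> P_A" using H by (auto simp: Str_def)
  have "minor G k s \<in> D" using G s by (intro clone_minor[OF D G(1) _ k]) (auto simp: pf_le_def)
  moreover have "pf_le (minor H k s) (minor G k s)" using G(2)
    by (auto simp: pf_le_def fn_minor split: if_splits)
  ultimately show ?thesis using minor_P_A[OF HP k] by (auto simp: Str_def)
qed

lemma pstar_P_A: "F \<in> P_A \<Longrightarrow> G \<in> P_A \<Longrightarrow> pstar F G \<in> P_A"
  by (auto simp: P_A_def fn_pstar split: if_splits option.splits)

lemma Str_pstar:
  assumes D: "partial_clone D" and H1: "H1 \<in> Str D" and H2: "H2 \<in> Str D"
  shows "pstar H1 H2 \<in> Str D"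
proof -
  obtain G1 where G1: "G1 \<in> D" "pf_le H1 G1" and P1: "H1 \<in> P_A" using H1 by (auto simp: Str_def)
  obtain G2 where G2: "G2 \<in> D" "pf_le H2 G2" and P2: "H2 \<in> P_A" using H2 by (auto simp: Str_def)
  have "pstar G1 G2 \<in> D" by (rule clone_pstar[OF D G1(1) G2(1)])
  moreover have "pf_le (pstar H1 H2) (pstar G1 G2)" using G1(2) G2(2)
    by (auto simp: pf_le_def fn_pstar split: if_splits option.splits)
  ultimately show ?thesis using pstar_P_A[OF P1 P2] by (auto simp: Str_def)
qed

lemma Str_pclass_ops:
  assumes D: "partial_clone D" and H: "H \<in> Str D"
  shows "zeta H \<in> Str D" "tau H \<in> Str D" "nabla H \<in> Str D" "Delta H \<in> Str D"
proof -
  have HP: "H \<in> P_A" using H by (simp add: Str_def)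
  then have a: "arity H \<ge> 1" by (rule P_A_arity)
  show "zeta H \<in> Str D" unfolding zeta_minor[OF HP] using a by (intro Str_minor[OF D H]) auto
  show "nabla H \<in> Str D" unfolding nabla_minor by (intro Str_minor[OF D H]) auto
  show "tau H \<in> Str D"
  proof (cases "arity H < 2")
    case True then show ?thesis using H by (simp add: tau_def)
  next
    case False then show ?thesis unfolding tau_minor[of H, OF leI[OF False]]
      by (intro Str_minor[OF D H]) auto
  qed
  show "Delta H \<in> Str D"
  proof (cases "arity H < 2")
    case True then show ?thesis using H by (simp add: Delta_def)
  next
    case False then show ?thesis unfolding Delta_minor[of H, OF leI[OF False]]
      by (intro Str_minor[OF D H]) auto
  qed
qed

lemma Str_sub: "X \<subseteq> P_A \<Longrightarrow> X \<subseteq> Str X"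
  using pf_le_refl by (auto simp: Str_def)

lemma Str_Str: "Str (Str X) = Str X"
  unfolding Str_def using pf_le_trans pf_le_refl by blast

lemma Str_Un: "Str (A \<union> B) = Str A \<union> Str B"
  unfolding Str_def by blast

lemma Str_Int: "Str (A \<inter> B) \<subseteq> Str A \<inter> Str B"
  unfolding Str_def by blast

lemma Str_O_A:
  assumes "D \<subseteq> O_A" shows "Str D \<inter> O_A \<subseteq> D"
proof
  fix F assume F: "F \<in> Str D \<inter> O_A"
  then obtain G where G: "G \<in> D" "pf_le F G" by (auto simp: Str_def)
  have GO: "G \<in> O_A" using G assms by auto
  have "F = G"
  proof (rule pfun_eqI)
    show ar: "arity F = arity G" using G by (simp add: pf_le_def)
    fix xs show "fn F xs = fn G xs"
    proof (cases "length xs = arity F")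
      case True
      then obtain v where "fn F xs = Some v" using F by (auto simp: O_A_def)
      then show ?thesis using G by (simp add: pf_le_def)
    next
      case False
      have FP: "F \<in> P_A" and GP: "G \<in> P_A" using F GO by (auto simp: O_A_def)
      have "fn F xs = None" using FP False unfolding P_A_def by blast
      moreover have "fn G xs = None" using GP False ar unfolding P_A_def by auto
      ultimately show ?thesis by simp
    qed
  qed
  then show "F \<in> D" using G by simp
qed

theorem mainTheorem11:
  fixes C D T :: "('a::finite) pfun set" and I :: "'a pfun set set"
  assumes "total_clone C" and "total_clone D" and "D \<subseteq> C"
    and "partial_class T" and "strong T"
    and "I \<subseteq> I_str C"
    and "T \<inter> O_A \<subseteq> D"
    and "set_star T (Str D) \<subseteq> Str D \<union> T"
    and "set_star (Str D) T \<subseteq> Str D \<union> T"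
    and "\<forall>X\<in>I. \<forall>Y\<in>I. X \<noteq> Y \<longrightarrow> X \<inter> T \<noteq> Y \<inter> T"
  shows "\<exists>h. inj_on h I \<and> h ` I \<subseteq> I_str D"
proof -
  define K where "K = Str D \<union> T"
  have Dc: "partial_clone D" and DO: "D \<subseteq> O_A" using assms(2) by (auto simp: total_clone_def)
  have TP: "T \<subseteq> P_A" using assms(4) by (simp add: partial_class_def)
  have SP: "Str D \<subseteq> P_A" by (auto simp: Str_def)
  have KP: "K \<subseteq> P_A" using TP SP by (auto simp: K_def)
  have star: "\<forall>F\<in>K. \<forall>G\<in>K. pstar F G \<in> K"
  proof (intro ballI)
    fix F G assume F: "F \<in> K" and G: "G \<in> K"
    show "pstar F G \<in> K"
    proof (cases "F \<in> T")
      case FT: True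
      show ?thesis
      proof (cases "G \<in> T")
        case True then show ?thesis using FT assms(4) by (auto simp: partial_class_def K_def)
      next
        case False then have "G \<in> Str D" using G by (auto simp: K_def)
        then have "pstar F G \<in> set_star T (Str D)" unfolding set_star_def using FT by blast
        then show ?thesis using assms(8) unfolding K_def by blast
      qed
    next
      case FT: False
      then have FS: "F \<in> Str D" using F by (auto simp: K_def)
      show ?thesis
      proof (cases "G \<in> T")
        case True
        then have "pstar F G \<in> set_star (Str D) T" unfolding set_star_def using FS by blast
        then show ?thesis using assms(9) unfolding K_def by blast
      next
        case False then have "G \<in> Str D" using G by (auto simp: K_def)
        then show ?thesis using FS Str_pstar[OF Dc] by (auto simp: K_def)
      qed
    qed
  qed
  have ops: "\<forall>F\<in>K. zeta F \<in> K \<and> tau F \<in> K \<and> nabla F \<in> K \<and> Delta F \<in> K"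
  proof (intro ballI)
    fix F assume F: "F \<in> K"
    show "zeta F \<in> K \<and> tau F \<in> K \<and> nabla F \<in> K \<and> Delta F \<in> K"
    proof (cases "F \<in> T")
      case True then show ?thesis using assms(4) by (auto simp: partial_class_def K_def)
    next
      case False then have "F \<in> Str D" using F by (auto simp: K_def)
      then show ?thesis using Str_pclass_ops[OF Dc] by (auto simp: K_def)
    qed
  qed
  have Kclass: "partial_class K" using KP star ops by (simp add: partial_class_def)
  have Kclone: "partial_clone K"
    unfolding partial_clone_def
  proof (intro conjI allI impI)
    show "K \<subseteq> P_A" by (rule KP)
  next
    fix n i :: nat assume "1 \<le> n \<and> i < n"
    then have "proj n i \<in> D" using Dc by (auto simp: partial_clone_def)
    then show "proj n i \<in> K" using Str_sub[of D] Dc unfolding K_def partial_clone_def by blast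
  next
    fix F Gs m assume "F \<in> K \<and> set Gs \<subseteq> K \<and> length Gs = arity F \<and> (\<forall>G\<in>set Gs. arity G = m)"
    then show "pcomp F Gs \<in> K" using pclass_comp[OF Kclass] by blast
  qed
  have Kstrong: "Str K = K"
    using assms(5) unfolding K_def strong_def by (metis Str_Str Str_Un)
  define h where "h = (\<lambda>X. X \<inter> K)"
  have "h X \<in> I_str D" if X: "X \<in> I" for X
  proof -
    have XI: "partial_clone X" "strong X" "X \<inter> O_A = C" using X assms(6) by (auto simp: I_str_def)
    have pc: "partial_clone (h X)" using XI(1) Kclone unfolding h_def partial_clone_def by auto
    have st: "strong (h X)"
    proof -
      have "Str (X \<inter> K) \<subseteq> X \<inter> K" using Str_Int[of X K] XI(2) Kstrong by (auto simp: strong_def)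
      moreover have "X \<inter> K \<subseteq> Str (X \<inter> K)" using KP by (intro Str_sub) auto
      ultimately show ?thesis by (auto simp: h_def strong_def)
    qed
    have "h X \<inter> O_A = D"
    proof
      show "h X \<inter> O_A \<subseteq> D" using Str_O_A[OF DO] assms(7) by (auto simp: h_def K_def)
      have "D \<subseteq> X" using XI(3) assms(3) assms(1) by (auto simp: total_clone_def)
      moreover have "D \<subseteq> K" using Str_sub[of D] Dc unfolding K_def partial_clone_def by blast
      ultimately show "D \<subseteq> h X \<inter> O_A" using DO by (auto simp: h_def)
    qed
    then show ?thesis using pc st by (simp add: I_str_def)
  qed
  moreover have "inj_on h I"
  proof (rule inj_onI)
    fix X Y assume "X \<in> I" "Y \<in> I" "h X = h Y"
    then have "X \<inter> T = Y \<inter> T" unfolding h_def K_def by blast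
    then show "X = Y" using assms(10) \<open>X \<in> I\<close> \<open>Y \<in> I\<close> by blast
  qed
  ultimately show ?thesis by blast
qed

end
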